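(* Let $(\mathcal S,\mathcal A,P,R,d_0)$ be a finite episodic MDP with horizon $T$ and $\pi_\theta$ a parameterized policy satisfying the score bound described in the context. Then there exists a finite constant $L_e$ such that for all $\gamma\in[0,1]$ (and all $\theta$), $$\Big\|\sum_{s\in\mathcal S}V^{\pi_\theta}_\gamma(s)\,\frac{\partial}{\partial\theta}d^{\pi_\theta}_\gamma(s)\Big\|\le(1-\gamma)L_e.$$
   Context: Setting: $\mathcal S$ is a finite set of states, $\mathcal A$ a finite set of actions, $P(s'\mid s,a)$ a transition function, $R(\cdot\mid s,a,s')$ a reward distribution supported in $[-R_{\max},R_{\max}]$, and $d_0$ an initial state distribution. There is a terminal absorbing state in which the agent stays and receives reward $0$. An episode: $S_0\sim d_0$; at each time $t$, $A_t\sim\pi_\theta(\cdot\mid S_t)$, $S_{t+1}\sim P(\cdot\mid S_t,A_t)$, $R_t\sim R(\cdot\mid S_t,A_t,S_{t+1})$; the horizon $T$ is fixed and $S_T$ is terminal. The policy $\pi_\theta(a\mid s)$ is positive and differentiable in $\theta\in\mathbb R^n$, and there is a constant $L_\pi$ with $\big\|\frac{\partial}{\partial\theta}\ln\pi_\theta(a\mid s)\big\|\le L_\pi$ for all $\theta,s,a$. Probabilities and expectations are under $\pi=\pi_\theta$. For $\gamma\in[0,1]$ (with $0^0=1$), $V^{\pi_\theta}_\gamma(s)=\mathbb E\big[\sum_{i=t}^{T}\gamma^{i-t}R_i\,\big|\,S_t=s\big]$, treated as a function of $s$ alone (the conditional expectation is assumed not to depend on $t$), and $d^{\pi_\theta}_\gamma(s)=d_0(s)+(1-\gamma)\sum_{t=1}^{T-1}\Pr(S_t=s)$.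 *)

theory Defs
  imports "HOL-Probability.Probability"
begin

definition traj_prob :: "'s pmf \<Rightarrow> ('s \<Rightarrow> 'a \<Rightarrow> 's pmf) \<Rightarrow> ('s \<Rightarrow> 'a pmf)
    \<Rightarrow> 's list \<Rightarrow> 'a list \<Rightarrow> real" where
  "traj_prob d0 P pol ss as =
     pmf d0 (ss ! 0) *
     (\<Prod>j<length as. pmf (pol (ss ! j)) (as ! j) * pmf (P (ss ! j) (as ! j)) (ss ! (j + 1)))"

text \<open>All trajectories of an episode with horizon T: states S_0..S_{T+1},
actions A_0..A_T (rewards R_0..R_T).\<close>
definition trajs :: "nat \<Rightarrow> ('s list \<times> 'a list) set" where
  "trajs T = {(ss, as). length ss = T + 2 \<and> length as = T + 1}"

definition state_prob :: "'s pmf \<Rightarrow> ('s \<Rightarrow> 'a \<Rightarrow> 's pmf) \<Rightarrow> ('s \<Rightarrow> 'a pmf)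
    \<Rightarrow> nat \<Rightarrow> nat \<Rightarrow> 's \<Rightarrow> real" where
  "state_prob d0 P pol T t s =
     (\<Sum>(ss, as) \<in> trajs T. if ss ! t = s then traj_prob d0 P pol ss as else 0)"

definition mean_reward :: "('s \<Rightarrow> 'a \<Rightarrow> 's \<Rightarrow> real measure) \<Rightarrow> 's \<Rightarrow> 'a \<Rightarrow> 's \<Rightarrow> real" where
  "mean_reward R s a s' = integral\<^sup>L (R s a s') (\<lambda>x. x)"

definition cond_return :: "'s pmf \<Rightarrow> ('s \<Rightarrow> 'a \<Rightarrow> 's pmf) \<Rightarrow> ('s \<Rightarrow> 'a pmf)
    \<Rightarrow> ('s \<Rightarrow> 'a \<Rightarrow> 's \<Rightarrow> real measure) \<Rightarrow> nat \<Rightarrow> real \<Rightarrow> nat \<Rightarrow> 's \<Rightarrow> real" where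
  "cond_return d0 P pol R T \<gamma> t s =
     (\<Sum>(ss, as) \<in> trajs T. if ss ! t = s then traj_prob d0 P pol ss as *
        (\<Sum>i = t..T. \<gamma> ^ (i - t) * mean_reward R (ss ! i) (as ! i) (ss ! (i + 1))) else 0)
     / state_prob d0 P pol T t s"

definition disc_visit :: "'s pmf \<Rightarrow> ('s \<Rightarrow> 'a \<Rightarrow> 's pmf) \<Rightarrow> ('s \<Rightarrow> 'a pmf)
    \<Rightarrow> nat \<Rightarrow> real \<Rightarrow> 's \<Rightarrow> real" where
  "disc_visit d0 P pol T \<gamma> s =
     pmf d0 s + (1 - \<gamma>) * (\<Sum>t = 1..T - 1. state_prob d0 P pol T t s)"

end

theory Submission imports Defs begin

lemma gsum_bound:
  fixes f :: "'b \<Rightarrow> 'v::euclidean_space \<Rightarrow> real"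
  assumes "finite A" "\<forall>a\<in>A. \<exists>g. GDERIV (f a) x :> g \<and> norm g \<le> L"
  shows "\<exists>G. GDERIV (\<lambda>y. \<Sum>a\<in>A. f a y) x :> G \<and> norm G \<le> real (card A) * L"
  using assms
proof (induction A rule: finite_induct)
  case empty
  then show ?case by (auto intro: GDERIV_const)
next
  case (insert a A)
  then obtain G where G: "GDERIV (\<lambda>y. \<Sum>a\<in>A. f a y) x :> G" "norm G \<le> real (card A) * L" by auto
  from insert obtain g where g: "GDERIV (f a) x :> g" "norm g \<le> L" by auto
  have "GDERIV (\<lambda>y. f a y + (\<Sum>a\<in>A. f a y)) x :> g + G" by (rule GDERIV_add[OF g(1) G(1)])
  moreover have "norm (g + G) \<le> real (card (insert a A)) * L"
    using insert(1,2) g(2) G(2) norm_triangle_ineq[of g G] by (simp add: algebra_simps)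
  ultimately show ?case using insert(1,2) by auto
qed

lemma gprod_bound:
  fixes f :: "nat \<Rightarrow> 'v::euclidean_space \<Rightarrow> real"
  assumes "\<forall>j<n. (\<exists>g. GDERIV (f j) x :> g \<and> norm g \<le> L) \<and> (\<forall>y. 0 \<le> f j y \<and> f j y \<le> 1)"
  shows "\<exists>G. GDERIV (\<lambda>y. \<Prod>j<n. f j y) x :> G \<and> norm G \<le> real n * L"
  using assms
proof (induction n)
  case 0
  then show ?case by (auto intro: GDERIV_const)
next
  case (Suc n)
  then obtain G where G: "GDERIV (\<lambda>y. \<Prod>j<n. f j y) x :> G" "norm G \<le> real n * L" by auto
  from Suc.prems obtain g where g: "GDERIV (f n) x :> g" "norm g \<le> L" by auto
  have f01: "0 \<le> f n x" "f n x \<le> 1" using Suc.prems by auto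
  have p01: "0 \<le> (\<Prod>j<n. f j x)" "(\<Prod>j<n. f j x) \<le> 1" using Suc.prems
    by (auto intro!: prod_nonneg prod_le_1)
  have "GDERIV (\<lambda>y. (\<Prod>j<n. f j y) * f n y) x :> (\<Prod>j<n. f j x) *\<^sub>R g + f n x *\<^sub>R G"
    by (rule GDERIV_mult[OF G(1) g(1)])
  moreover have "norm ((\<Prod>j<n. f j x) *\<^sub>R g + f n x *\<^sub>R G) \<le> real (Suc n) * L"
  proof -
    have "norm ((\<Prod>j<n. f j x) *\<^sub>R g + f n x *\<^sub>R G) \<le> (\<Prod>j<n. f j x) * norm g + f n x * norm G"
      using norm_triangle_ineq p01 f01 by (smt (verit) norm_scaleR)
    also have "\<dots> \<le> 1 * L + 1 * (real n * L)"
      apply (rule add_mono; rule mult_mono)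
      using p01 f01 g G by auto
    finally show ?thesis by (simp add: algebra_simps)
  qed
  moreover have "(\<lambda>y. \<Prod>j<Suc n. f j y) = (\<lambda>y. (\<Prod>j<n. f j y) * f n y)"
    by (simp add: lessThan_Suc mult.commute)
  ultimately show ?case by metis
qed

lemma gderiv_zero_min:
  fixes f :: "'v::euclidean_space \<Rightarrow> real"
  assumes "GDERIV f x :> G" "\<forall>y. 0 \<le> f y" "f x = 0"
  shows "G = 0"
proof -
  have "(\<lambda>h. h \<bullet> G) = (\<lambda>v. 0)"
    using differential_zero_maxmin[of x UNIV f "\<lambda>h. h \<bullet> G"] assms
    by (auto simp: gderiv_def)
  then have "G \<bullet> G = 0" by metis
  then show ?thesis by simp
qed

lemma finite_trajs: "finite (trajs T :: ('s::finite list \<times> 'a::finite list) set)"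
proof -
  have "trajs T \<subseteq> {xs::'s list. set xs \<subseteq> UNIV \<and> length xs = T+2} \<times> {xs::'a list. set xs \<subseteq> UNIV \<and> length xs = T+1}"
    by (auto simp: trajs_def)
  moreover have "finite ({xs::'s list. set xs \<subseteq> UNIV \<and> length xs = T+2} \<times> {xs::'a list. set xs \<subseteq> UNIV \<and> length xs = T+1})"
    by (intro finite_cartesian_product finite_lists_length_eq) auto
  ultimately show ?thesis by (rule finite_subset)
qed

lemma gsum_deriv:
  fixes f :: "'b \<Rightarrow> 'v::euclidean_space \<Rightarrow> real"
  assumes "finite A" "\<forall>a\<in>A. GDERIV (f a) x :> g a"
  shows "GDERIV (\<lambda>y. \<Sum>a\<in>A. f a y) x :> (\<Sum>a\<in>A. g a)"
  using assms
proof (induction A rule: finite_induct)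
  case empty
  then show ?case by (auto intro: GDERIV_const)
next
  case (insert a A)
  then show ?case by (auto intro!: GDERIV_add)
qed

lemma traj_prob_nonneg: "0 \<le> traj_prob d0 P pol ss as"
  unfolding traj_prob_def by (auto intro!: prod_nonneg mult_nonneg_nonneg)

lemma state_prob_nonneg: "0 \<le> state_prob d0 P pol T t s"
  unfolding state_prob_def by (auto intro!: sum_nonneg traj_prob_nonneg split: prod.splits)

lemma cond_return_bound:
  assumes M: "\<And>a b c. \<bar>mean_reward R a b c\<bar> \<le> M" and g: "0 \<le> \<gamma>" "\<gamma> \<le> 1"
    and pos: "state_prob d0 P pol T t s > 0"
  shows "\<bar>cond_return d0 P pol R T \<gamma> t s\<bar> \<le> real (T+1) * M"
proof -
  have M0: "0 \<le> M" using M[of undefined undefined undefined] by linarith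
  have inner: "\<bar>\<Sum>i = t..T. \<gamma> ^ (i - t) * mean_reward R (ss ! i) (as ! i) (ss ! (i + 1))\<bar> \<le> real (T+1) * M" for ss :: "'a list" and as :: "'b list"
  proof -
    have "\<bar>\<Sum>i = t..T. \<gamma> ^ (i - t) * mean_reward R (ss ! i) (as ! i) (ss ! (i + 1))\<bar>
        \<le> (\<Sum>i = t..T. \<bar>\<gamma> ^ (i - t) * mean_reward R (ss ! i) (as ! i) (ss ! (i + 1))\<bar>)"
      by (rule sum_abs)
    also have "\<dots> \<le> (\<Sum>i = t..T. M)"
    proof (rule sum_mono)
      fix i
      have "\<bar>\<gamma> ^ (i - t)\<bar> \<le> 1" using g by (simp add: power_le_one)
      then have "\<bar>\<gamma> ^ (i - t)\<bar> * \<bar>mean_reward R (ss ! i) (as ! i) (ss ! (i + 1))\<bar> \<le> 1 * M"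
        using M by (intro mult_mono) auto
      then show "\<bar>\<gamma> ^ (i - t) * mean_reward R (ss ! i) (as ! i) (ss ! (i + 1))\<bar> \<le> M"
        by (simp add: abs_mult)
    qed
    also have "\<dots> \<le> real (T+1) * M" using M0 by (auto intro!: mult_right_mono)
    finally show ?thesis .
  qed
  define num where "num = (\<Sum>(ss, as) \<in> trajs T. if ss ! t = s then traj_prob d0 P pol ss as *
        (\<Sum>i = t..T. \<gamma> ^ (i - t) * mean_reward R (ss ! i) (as ! i) (ss ! (i + 1))) else 0)"
  have "\<bar>num\<bar> \<le> (\<Sum>(ss, as) \<in> trajs T. \<bar>if ss ! t = s then traj_prob d0 P pol ss as *
        (\<Sum>i = t..T. \<gamma> ^ (i - t) * mean_reward R (ss ! i) (as ! i) (ss ! (i + 1))) else 0\<bar>)"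
    unfolding num_def by (rule order_trans[OF sum_abs]) (simp add: case_prod_unfold)
  also have "\<dots> \<le> (\<Sum>(ss, as) \<in> trajs T. real (T+1) * M * (if ss ! t = s then traj_prob d0 P pol ss as else 0))"
    unfolding case_prod_unfold
  proof (rule sum_mono)
    fix x :: "'a list \<times> 'b list"
    show "\<bar>if fst x ! t = s then traj_prob d0 P pol (fst x) (snd x) *
        (\<Sum>i = t..T. \<gamma> ^ (i - t) * mean_reward R (fst x ! i) (snd x ! i) (fst x ! (i + 1))) else 0\<bar>
      \<le> real (T+1) * M * (if fst x ! t = s then traj_prob d0 P pol (fst x) (snd x) else 0)"
    proof (cases "fst x ! t = s")
      case True
      define tp where "tp = traj_prob d0 P pol (fst x) (snd x)"
      define S where "S = (\<Sum>i = t..T. \<gamma> ^ (i - t) * mean_reward R (fst x ! i) (snd x ! i) (fst x ! (i + 1)))"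
      have a: "\<bar>S\<bar> \<le> real (T+1) * M" unfolding S_def by (rule inner)
      have b: "0 \<le> tp" unfolding tp_def by (rule traj_prob_nonneg)
      have "\<bar>tp * S\<bar> = tp * \<bar>S\<bar>" using b by (simp add: abs_mult)
      also have "\<dots> \<le> tp * (real (T+1) * M)" by (rule mult_left_mono[OF a b])
      finally have "\<bar>tp * S\<bar> \<le> real (T+1) * M * tp" by (simp only: mult.commute)
      moreover have "(if fst x ! t = s then traj_prob d0 P pol (fst x) (snd x) *
        (\<Sum>i = t..T. \<gamma> ^ (i - t) * mean_reward R (fst x ! i) (snd x ! i) (fst x ! (i + 1))) else 0) = tp * S"
        unfolding tp_def S_def using True by (rule if_P)
      moreover have "(if fst x ! t = s then traj_prob d0 P pol (fst x) (snd x) else 0) = tp"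
        unfolding tp_def using True by (rule if_P)
      ultimately show ?thesis by (simp only:)
    next case False then show ?thesis by simp qed
  qed
  also have "\<dots> = real (T+1) * M * state_prob d0 P pol T t s"
    unfolding state_prob_def case_prod_unfold by (simp add: sum_distrib_left)
  finally have "\<bar>num\<bar> \<le> real (T+1) * M * state_prob d0 P pol T t s" .
  moreover have "cond_return d0 P pol R T \<gamma> t s = num / state_prob d0 P pol T t s"
    unfolding cond_return_def num_def ..
  ultimately show ?thesis using pos
    by (metis abs_div_pos pos_divide_le_eq)
qed

theorem lemma3:
  fixes d0 :: "'s::finite pmf"
    and P :: "'s \<Rightarrow> 'a::finite \<Rightarrow> 's pmf"
    and R :: "'s \<Rightarrow> 'a \<Rightarrow> 's \<Rightarrow> real measure"
    and Rmax :: real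
    and sterm :: 's
    and T :: nat
    and pol :: "'v::euclidean_space \<Rightarrow> 's \<Rightarrow> 'a pmf"
    and Lpi :: real
    and V :: "real \<Rightarrow> 'v \<Rightarrow> 's \<Rightarrow> real"
  assumes reward_dist: "\<forall>s a s'. prob_space (R s a s') \<and> sets (R s a s') = sets borel
                          \<and> (AE x in R s a s'. \<bar>x\<bar> \<le> Rmax)"
    and term_absorbing: "\<forall>a. pmf (P sterm a) sterm = 1"
    and term_reward: "\<forall>a s'. AE x in R sterm a s'. x = 0"
    and terminal_at_T: "\<forall>\<theta>. state_prob d0 P (pol \<theta>) T T sterm = 1"
    and pol_pos: "\<forall>\<theta> s a. pmf (pol \<theta> s) a > 0"
    and pol_diff: "\<forall>\<theta> s a. (\<lambda>\<theta>'. pmf (pol \<theta>' s) a) differentiable (at \<theta>)"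
    and score_bound: "\<forall>\<theta> s a. \<exists>g. GDERIV (\<lambda>\<theta>'. ln (pmf (pol \<theta>' s) a)) \<theta> :> g \<and> norm g \<le> Lpi"
    and V_def: "\<forall>\<gamma>\<in>{0..1}. \<forall>\<theta> t s. t \<le> T \<longrightarrow> state_prob d0 P (pol \<theta>) T t s > 0 \<longrightarrow>
                  V \<gamma> \<theta> s = cond_return d0 P (pol \<theta>) R T \<gamma> t s"
  shows "\<exists>Le::real. \<forall>\<gamma>\<in>{0..1}. \<forall>\<theta>. \<exists>D::'s \<Rightarrow> 'v.
           (\<forall>s. GDERIV (\<lambda>\<theta>'. disc_visit d0 P (pol \<theta>') T \<gamma> s) \<theta> :> D s)
           \<and> norm (\<Sum>s\<in>UNIV. V \<gamma> \<theta> s *\<^sub>R D s) \<le> (1 - \<gamma>) * Le"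
proof -
  define M where "M = (\<Sum>x\<in>(UNIV::('s\<times>'a\<times>'s) set). \<bar>mean_reward R (fst x) (fst (snd x)) (snd (snd x))\<bar>)"
  have Mb: "\<bar>mean_reward R a b c\<bar> \<le> M" for a b c
    unfolding M_def using member_le_sum[of "(a,b,c)" UNIV "\<lambda>x. \<bar>mean_reward R (fst x) (fst (snd x)) (snd (snd x))\<bar>"]
    by simp
  have M0: "0 \<le> M" using Mb[of sterm undefined sterm] by linarith
  have L0: "0 \<le> Lpi" using score_bound norm_ge_zero order_trans by metis
  have polg: "\<exists>g. GDERIV (\<lambda>\<theta>'. pmf (pol \<theta>' s) a) \<theta> :> g \<and> norm g \<le> Lpi" for \<theta> s a
  proof -
    obtain g0 where g0: "GDERIV (\<lambda>\<theta>'. ln (pmf (pol \<theta>' s) a)) \<theta> :> g0" "norm g0 \<le> Lpi"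
      using score_bound by blast
    have "GDERIV (\<lambda>\<theta>'. exp (ln (pmf (pol \<theta>' s) a))) \<theta> :> exp (ln (pmf (pol \<theta> s) a)) *\<^sub>R g0"
      by (rule GDERIV_DERIV_compose[OF g0(1)]) (rule DERIV_exp)
    moreover have "(\<lambda>\<theta>'. exp (ln (pmf (pol \<theta>' s) a))) = (\<lambda>\<theta>'. pmf (pol \<theta>' s) a)"
      using pol_pos by simp
    moreover have "exp (ln (pmf (pol \<theta> s) a)) = pmf (pol \<theta> s) a" using pol_pos by simp
    ultimately have d: "GDERIV (\<lambda>\<theta>'. pmf (pol \<theta>' s) a) \<theta> :> pmf (pol \<theta> s) a *\<^sub>R g0" by simp
    have "pmf (pol \<theta> s) a * norm g0 \<le> 1 * Lpi"
      by (rule mult_mono) (auto simp: pmf_le_1 g0(2))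
    then have "norm (pmf (pol \<theta> s) a *\<^sub>R g0) \<le> Lpi" by simp
    then show ?thesis using d by blast
  qed
  define K1 where "K1 = real (T+1) * Lpi"
  have K10: "0 \<le> K1" unfolding K1_def using L0 by simp
  have trajg: "\<exists>g. GDERIV (\<lambda>\<theta>'. traj_prob d0 P (pol \<theta>') ss as) \<theta> :> g \<and> norm g \<le> K1"
    if len: "length as = T+1" for \<theta> ss and as :: "'a list"
  proof -
    define f where "f = (\<lambda>j \<theta>'. pmf (pol \<theta>' (ss ! j)) (as ! j) * pmf (P (ss ! j) (as ! j)) (ss ! (j + 1)))"
    have "\<forall>j<T+1. (\<exists>g. GDERIV (f j) \<theta> :> g \<and> norm g \<le> Lpi) \<and> (\<forall>y. 0 \<le> f j y \<and> f j y \<le> 1)"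
    proof (intro allI impI conjI)
      fix j :: nat
      obtain gp where gp: "GDERIV (\<lambda>\<theta>'. pmf (pol \<theta>' (ss!j)) (as!j)) \<theta> :> gp" "norm gp \<le> Lpi"
        using polg by blast
      have "GDERIV (f j) \<theta> :> pmf (pol \<theta> (ss ! j)) (as ! j) *\<^sub>R 0 + pmf (P (ss ! j) (as ! j)) (ss ! (j + 1)) *\<^sub>R gp"
        unfolding f_def by (rule GDERIV_mult[OF gp(1) GDERIV_const])
      moreover have "pmf (P (ss ! j) (as ! j)) (ss ! (j + 1)) * norm gp \<le> 1 * Lpi"
        by (rule mult_mono) (auto simp: pmf_le_1 gp(2))
      ultimately show "\<exists>g. GDERIV (f j) \<theta> :> g \<and> norm g \<le> Lpi" by auto
    next
      fix j y show "0 \<le> f j y" unfolding f_def by simp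
    next
      fix j y show "f j y \<le> 1" unfolding f_def by (intro mult_le_one) (auto simp: pmf_le_1)
    qed
    from gprod_bound[OF this] obtain G where G: "GDERIV (\<lambda>y. \<Prod>j<T+1. f j y) \<theta> :> G" "norm G \<le> real (T+1) * Lpi"
      by blast
    have "GDERIV (\<lambda>y. pmf d0 (ss ! 0) * (\<Prod>j<T+1. f j y)) \<theta> :> pmf d0 (ss ! 0) *\<^sub>R G + (\<Prod>j<T+1. f j \<theta>) *\<^sub>R 0"
      by (rule GDERIV_mult[OF GDERIV_const G(1)])
    moreover have "(\<lambda>y. pmf d0 (ss ! 0) * (\<Prod>j<T+1. f j y)) = (\<lambda>\<theta>'. traj_prob d0 P (pol \<theta>') ss as)"
      unfolding traj_prob_def f_def len by simp
    moreover have "pmf d0 (ss ! 0) * norm G \<le> 1 * K1"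
      unfolding K1_def using G(2) by (intro mult_mono) (auto simp: pmf_le_1)
    ultimately show ?thesis by auto
  qed
  define K where "K = real (card (trajs T :: ('s list \<times> 'a list) set)) * K1"
  have K0: "0 \<le> K" unfolding K_def using K10 by simp
  have spg: "\<exists>g. GDERIV (\<lambda>\<theta>'. state_prob d0 P (pol \<theta>') T t s) \<theta> :> g \<and> norm g \<le> K" for \<theta> t s
  proof -
    define f where "f = (\<lambda>x \<theta>'. case x of (ss, as) \<Rightarrow> if ss ! t = s then traj_prob d0 P (pol \<theta>') ss as else 0)"
    have "\<forall>x\<in>trajs T. \<exists>g. GDERIV (f x) \<theta> :> g \<and> norm g \<le> K1"
    proof
      fix x :: "'s list \<times> 'a list" assume "x \<in> trajs T"
      then obtain ss as where x: "x = (ss, as)" "length as = T+1" by (auto simp: trajs_def)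
      show "\<exists>g. GDERIV (f x) \<theta> :> g \<and> norm g \<le> K1"
      proof (cases "ss ! t = s")
        case True then show ?thesis using trajg[OF x(2)] x(1) unfolding f_def by simp
      next
        case False then show ?thesis using x(1) K10 GDERIV_const[of 0 \<theta>] unfolding f_def by (intro exI[of _ 0]) auto
      qed
    qed
    from gsum_bound[OF finite_trajs this] obtain G where
      G: "GDERIV (\<lambda>y. \<Sum>x\<in>trajs T. f x y) \<theta> :> G" "norm G \<le> K"
      unfolding K_def by blast
    moreover have "(\<lambda>y. \<Sum>x\<in>trajs T. f x y) = (\<lambda>\<theta>'. state_prob d0 P (pol \<theta>') T t s)"
      unfolding state_prob_def f_def by simp
    ultimately show ?thesis by auto
  qed
  define B where "B = real (T+1) * M"
  have B0: "0 \<le> B" unfolding B_def using M0 by simp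
  show ?thesis
  proof (rule exI[of _ "real (card (UNIV::'s set)) * (real T * (B * K))"], intro ballI allI)
    fix \<gamma> :: real and \<theta> :: 'v assume g: "\<gamma> \<in> {0..1}"
    from spg have "\<forall>t s. \<exists>g. GDERIV (\<lambda>\<theta>'. state_prob d0 P (pol \<theta>') T t s) \<theta> :> g \<and> norm g \<le> K" by blast
    then obtain G where G: "\<forall>t s. GDERIV (\<lambda>\<theta>'. state_prob d0 P (pol \<theta>') T t s) \<theta> :> G t s \<and> norm (G t s) \<le> K"
      by metis
    define D where "D s = (1 - \<gamma>) *\<^sub>R (\<Sum>t\<in>{1..T-1}. G t s)" for s
    have Dd: "\<forall>s. GDERIV (\<lambda>\<theta>'. disc_visit d0 P (pol \<theta>') T \<gamma> s) \<theta> :> D s"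
    proof
      fix s
      have "GDERIV (\<lambda>\<theta>'. \<Sum>t\<in>{1..T-1}. state_prob d0 P (pol \<theta>') T t s) \<theta> :> (\<Sum>t\<in>{1..T-1}. G t s)"
        by (rule gsum_deriv) (use G in auto)
      from GDERIV_add[OF GDERIV_const GDERIV_mult[OF GDERIV_const this]]
      show "GDERIV (\<lambda>\<theta>'. disc_visit d0 P (pol \<theta>') T \<gamma> s) \<theta> :> D s"
        unfolding disc_visit_def D_def by (rule GDERIV_subst) simp
    qed
    have trm: "norm (V \<gamma> \<theta> s *\<^sub>R G t s) \<le> B * K" if t: "t \<in> {1..T-1}" for t s
    proof (cases "state_prob d0 P (pol \<theta>) T t s > 0")
      case True
      have tT: "t \<le> T" using t by auto
      have "V \<gamma> \<theta> s = cond_return d0 P (pol \<theta>) R T \<gamma> t s"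
        using V_def g tT True by blast
      moreover have "\<bar>cond_return d0 P (pol \<theta>) R T \<gamma> t s\<bar> \<le> real (T+1) * M"
        using g by (intro cond_return_bound[OF Mb _ _ True]) auto
      ultimately have Vb: "\<bar>V \<gamma> \<theta> s\<bar> \<le> B" unfolding B_def by simp
      have Gb: "norm (G t s) \<le> K" using G by blast
      have "\<bar>V \<gamma> \<theta> s\<bar> * norm (G t s) \<le> B * K"
        using Vb Gb B0 by (intro mult_mono) auto
      then show ?thesis by simp
    next
      case False
      have "0 \<le> state_prob d0 P (pol \<theta>) T t s" by (rule state_prob_nonneg)
      then have z: "state_prob d0 P (pol \<theta>) T t s = 0" using False by linarith
      have Gd: "GDERIV (\<lambda>\<theta>'. state_prob d0 P (pol \<theta>') T t s) \<theta> :> G t s" using G by blast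
      have "G t s = 0" by (rule gderiv_zero_min[OF Gd]) (auto simp: z state_prob_nonneg)
      then show ?thesis using B0 K0 by simp
    qed
    have eq: "(\<Sum>s\<in>UNIV. V \<gamma> \<theta> s *\<^sub>R D s) = (1 - \<gamma>) *\<^sub>R (\<Sum>s\<in>UNIV. \<Sum>t\<in>{1..T-1}. V \<gamma> \<theta> s *\<^sub>R G t s)"
      unfolding D_def by (simp add: scaleR_sum_right mult.commute)
    have "norm (\<Sum>s\<in>UNIV. \<Sum>t\<in>{1..T-1}. V \<gamma> \<theta> s *\<^sub>R G t s) \<le> (\<Sum>s\<in>UNIV. \<Sum>t\<in>{1..T-1}. norm (V \<gamma> \<theta> s *\<^sub>R G t s))"
      by (rule order_trans[OF norm_sum sum_mono[OF norm_sum]])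
    also have "\<dots> \<le> (\<Sum>s\<in>(UNIV::'s set). \<Sum>t\<in>{1..T-1}. B * K)"
      by (intro sum_mono trm)
    also have "\<dots> = real (card (UNIV::'s set)) * (real (T - 1) * (B * K))" by simp
    also have "\<dots> \<le> real (card (UNIV::'s set)) * (real T * (B * K))"
      using B0 K0 by (intro mult_left_mono mult_right_mono) auto
    finally have nb: "norm (\<Sum>s\<in>UNIV. \<Sum>t\<in>{1..T-1}. V \<gamma> \<theta> s *\<^sub>R G t s) \<le> real (card (UNIV::'s set)) * (real T * (B * K))" .
    have "norm (\<Sum>s\<in>UNIV. V \<gamma> \<theta> s *\<^sub>R D s) = (1 - \<gamma>) * norm (\<Sum>s\<in>UNIV. \<Sum>t\<in>{1..T-1}. V \<gamma> \<theta> s *\<^sub>R G t s)"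
      unfolding eq using g by simp
    also have "\<dots> \<le> (1 - \<gamma>) * (real (card (UNIV::'s set)) * (real T * (B * K)))"
      using g nb by (intro mult_left_mono) auto
    finally show "\<exists>D. (\<forall>s. GDERIV (\<lambda>\<theta>'. disc_visit d0 P (pol \<theta>') T \<gamma> s) \<theta> :> D s)
           \<and> norm (\<Sum>s\<in>UNIV. V \<gamma> \<theta> s *\<^sub>R D s) \<le> (1 - \<gamma>) * (real (card (UNIV::'s set)) * (real T * (B * K)))"
      using Dd by blast
  qed
qed

end
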